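(* There is an absolute constant $C>0$ such that the following holds. Let $\mathbf T:\{0,1\}^n\to\{0,1\}$ be a size-$s$ stochastic decision tree. For every $\varepsilon\in(0,1/2)$ there is a deterministic decision tree $T^\star_{\mathrm{trunc}}:\{0,1\}^n\to\{0,1\}$ such that (1) $\mathrm{depth}(T^\star_{\mathrm{trunc}})\le C\log(s/\varepsilon)/\varepsilon^2$, and (2) $\Pr_{\mathbf x,\mathbf T}[T^\star_{\mathrm{trunc}}(\mathbf x)\neq\mathbf T(\mathbf x)]\le\mathrm{opt}_{\mathbf T}+3\varepsilon$, where $\mathbf x$ is uniform on $\{0,1\}^n$.
   Context: A stochastic decision tree (DT) $\mathbf{T}$ over $\{0,1\}^n$ is a rooted binary tree whose internal nodes are either deterministic nodes, each labeled by a variable $x_i$ ($i\in[n]$) with one outgoing edge followed when $x_i=0$ and one when $x_i=1$, or stochastic nodes, each with two outgoing edges followed with probabilities $p$ and $1-p$ (for a node-specific $p\in[0,1]$, using fresh independent randomness at each node), and whose leaves are labeled $0$ or $1$. On input $x$, $\mathbf{T}(x)$ is the (random) label of the leaf reached. A deterministic DT is one with no stochastic nodes. The size of a DT is its number of leaves; its depth is the maximum number of internal nodes on a root-to-leaf path. The mean function is $\mu_{\mathbf T}(x)=\Pr[\mathbf T(x)=1]$, $\mathrm{round}(t)=\mathbb 1[t\ge1/2]$, and $\mathrm{opt}_{\mathbf T}=\mathbb E_{\mathbf x}\Pr_{\mathbf T}[\mathbf T(\mathbf x)\ne\mathrm{round}(\mu_{\mathbf T}(\mathbf x))]$ is the Bayes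 optimal error. *)

theory Defs
  imports "HOL-Probability.Probability"
begin

text \<open>Inputs are bool lists of length n.
  Node i l r: deterministic node querying x_i, left child if x_i = 0 (False), right if x_i = 1.
  Stoch p l r: stochastic node, goes to l with probability p, to r with probability 1-p.\<close>

datatype sdt = Leaf bool | Node nat sdt sdt | Stoch real sdt sdt

fun wf_sdt :: "nat \<Rightarrow> sdt \<Rightarrow> bool" where
  "wf_sdt n (Leaf b) = True"
| "wf_sdt n (Node i l r) = (i < n \<and> wf_sdt n l \<and> wf_sdt n r)"
| "wf_sdt n (Stoch p l r) = (0 \<le> p \<and> p \<le> 1 \<and> wf_sdt n l \<and> wf_sdt n r)"

fun deterministic :: "sdt \<Rightarrow> bool" where
  "deterministic (Leaf b) = True"
| "deterministic (Node i l r) = (deterministic l \<and> deterministic r)"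
| "deterministic (Stoch p l r) = False"

fun tsize :: "sdt \<Rightarrow> nat" where
  "tsize (Leaf b) = 1"
| "tsize (Node i l r) = tsize l + tsize r"
| "tsize (Stoch p l r) = tsize l + tsize r"

fun depth :: "sdt \<Rightarrow> nat" where
  "depth (Leaf b) = 0"
| "depth (Node i l r) = Suc (max (depth l) (depth r))"
| "depth (Stoch p l r) = Suc (max (depth l) (depth r))"

fun run :: "sdt \<Rightarrow> bool list \<Rightarrow> bool pmf" where
  "run (Leaf b) x = return_pmf b"
| "run (Node i l r) x = (if x ! i then run r x else run l x)"
| "run (Stoch p l r) x = bernoulli_pmf p \<bind> (\<lambda>c. if c then run l x else run r x)"

definition cube :: "nat \<Rightarrow> bool list set" where
  "cube n = {xs. length xs = n}"

definition unif :: "nat \<Rightarrow> bool list pmf" where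
  "unif n = pmf_of_set (cube n)"

definition mu :: "sdt \<Rightarrow> bool list \<Rightarrow> real" where
  "mu T x = measure_pmf.prob (run T x) {True}"

definition round :: "real \<Rightarrow> bool" where
  "round t = (t \<ge> 1/2)"

definition opt :: "nat \<Rightarrow> sdt \<Rightarrow> real" where
  "opt n T = measure_pmf.expectation (unif n)
      (\<lambda>x. measure_pmf.prob (run T x) {y. y \<noteq> round (mu T x)})"

definition joint :: "nat \<Rightarrow> sdt \<Rightarrow> (bool list \<times> bool) pmf" where
  "joint n T = unif n \<bind> (\<lambda>x. run T x \<bind> (\<lambda>y. return_pmf (x, y)))"

text \<open>Pr_{x,T}[T'(x) \<noteq> T(x)] for a deterministic tree T' (whose output is
  the unique value in the support of run T' x).\<close>
definition disagree :: "nat \<Rightarrow> sdt \<Rightarrow> sdt \<Rightarrow> real" where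
  "disagree n T' T = measure_pmf.prob (joint n T \<bind> (\<lambda>(x, y). run T' x \<bind> (\<lambda>y'. return_pmf (y', y))))
      {(y', y). y' \<noteq> y}"

end

theory Submission
  imports Defs
begin

fun out :: "sdt \<Rightarrow> bool list \<Rightarrow> bool" where
  "out (Leaf b) x = b"
| "out (Node i l r) x = (if x ! i then out r x else out l x)"
| "out (Stoch p l r) x = out l x"

lemma run_det: "deterministic D \<Longrightarrow> run D x = return_pmf (out D x)"
  by (induction D) auto

lemma mu_pmf: "mu T x = pmf (run T x) True"
  unfolding mu_def by (simp add: measure_pmf_single)

lemma mu_Leaf: "mu (Leaf b) x = (if b then 1 else 0)"
  by (simp add: mu_pmf)

lemma mu_Node: "mu (Node i l r) x = (if x!i then mu r x else mu l x)"
  by (simp add: mu_pmf)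

lemma mu_Stoch: "0 \<le> p \<Longrightarrow> p \<le> 1 \<Longrightarrow> mu (Stoch p l r) x = p * mu l x + (1-p) * mu r x"
  by (simp add: mu_pmf pmf_bind)

lemma mu_bounds: "0 \<le> mu T x" "mu T x \<le> 1"
  by (simp_all add: mu_pmf pmf_le_1)

fun derandL :: "sdt \<Rightarrow> (real \<times> sdt) list" where
  "derandL (Leaf b) = [(1, Leaf b)]"
| "derandL (Node i l r) = concat (map (\<lambda>(wl,Dl). map (\<lambda>(wr,Dr). (wl*wr, Node i Dl Dr)) (derandL r)) (derandL l))"
| "derandL (Stoch p l r) = map (\<lambda>(w,D). (p*w, D)) (derandL l) @ map (\<lambda>(w,D). ((1-p)*w, D)) (derandL r)"

definition ind :: "bool \<Rightarrow> real" where "ind b = (if b then 1 else 0)"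

lemma sum_concat_map: "sum_list (map f (concat xss)) = sum_list (map (\<lambda>xs. sum_list (map f xs)) xss)"
  by (induction xss) auto

lemma sum_fst_mult: "(\<Sum>p\<leftarrow>xs. fst p * (c::real)) = (\<Sum>p\<leftarrow>xs. fst p) * c"
  by (induction xs) (auto simp: algebra_simps)

lemma derandL_wsum: "(\<Sum>(w,D)\<leftarrow>derandL T. w) = 1"
proof (induction T)
  case (Node i l r)
  have "(\<Sum>(w,D)\<leftarrow>derandL (Node i l r). w) = (\<Sum>(wl,Dl)\<leftarrow>derandL l. wl * (\<Sum>(wr,Dr)\<leftarrow>derandL r. wr))"
    by (simp add: sum_concat_map o_def case_prod_unfold sum_list_const_mult)
  then show ?case using Node by simp
next
  case (Stoch p l r)
  have "(\<Sum>(w,D)\<leftarrow>derandL (Stoch p l r). w) = p * (\<Sum>(w,D)\<leftarrow>derandL l. w) + (1-p) * (\<Sum>(w,D)\<leftarrow>derandL r. w)"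
    by (simp add: o_def case_prod_unfold sum_list_const_mult)
  then show ?case using Stoch by simp
qed simp

lemma derandL_mu: "wf_sdt n T \<Longrightarrow> mu T x = (\<Sum>(w,D)\<leftarrow>derandL T. w * ind (out D x))"
proof (induction T)
  case (Leaf b)
  then show ?case by (simp add: mu_Leaf ind_def)
next
  case (Node i l r)
  have wr: "(\<Sum>p\<leftarrow>derandL r. fst p) = 1" and wl: "(\<Sum>p\<leftarrow>derandL l. fst p) = 1"
    using derandL_wsum[of r] derandL_wsum[of l] by (simp_all add: case_prod_unfold)
  have inner: "(\<Sum>p\<leftarrow>derandL r. c * fst p * e (snd p)) = c * (\<Sum>p\<leftarrow>derandL r. fst p * e (snd p))" for c e
    by (simp add: mult.assoc sum_list_const_mult)
  have inner2: "(\<Sum>p\<leftarrow>derandL r. c * fst p * e) = c * e" for c e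
    using sum_fst_mult[where xs="derandL r" and c=e] wr by (simp add: mult.assoc sum_list_const_mult)
  have "(\<Sum>(w,D)\<leftarrow>derandL (Node i l r). w * ind (out D x)) =
     (\<Sum>pl\<leftarrow>derandL l. (\<Sum>p\<leftarrow>derandL r. fst pl * fst p * ind (if x!i then out (snd p) x else out (snd pl) x)))"
    by (simp add: sum_concat_map o_def case_prod_unfold)
  also have "\<dots> = (\<Sum>pl\<leftarrow>derandL l. (if x!i then fst pl * mu r x else fst pl * ind (out (snd pl) x)))"
  proof (cases "x!i")
    case True
    then show ?thesis using inner[of _ "\<lambda>D. ind (out D x)"] Node.IH(2) Node.prems
      by (simp add: case_prod_unfold)
  next
    case False
    then show ?thesis using inner2 by simp
  qed
  also have "\<dots> = (if x!i then mu r x else mu l x)"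
    using Node.IH(1) Node.prems wl sum_fst_mult[where xs="derandL l" and c="mu r x"] by (simp add: case_prod_unfold)
  finally show ?case by (simp add: mu_Node)
next
  case (Stoch p l r)
  have "(\<Sum>(w,D)\<leftarrow>derandL (Stoch p l r). w * ind (out D x)) = p * (\<Sum>(w,D)\<leftarrow>derandL l. w * ind (out D x)) + (1-p) * (\<Sum>(w,D)\<leftarrow>derandL r. w * ind (out D x))"
    by (simp add: o_def case_prod_unfold sum_list_const_mult mult.assoc)
  then show ?case using Stoch by (simp add: mu_Stoch)
qed

lemma derandL_props: "wf_sdt n T \<Longrightarrow> (w,D) \<in> set (derandL T) \<Longrightarrow>
   0 \<le> w \<and> deterministic D \<and> wf_sdt n D \<and> tsize D \<le> tsize T"
proof (induction T arbitrary: w D)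
  case (Node i l r)
  from Node.prems obtain wl Dl wr Dr where h: "(wl,Dl) \<in> set (derandL l)" "(wr,Dr) \<in> set (derandL r)"
    "w = wl*wr" "D = Node i Dl Dr" by auto
  have L: "0 \<le> wl \<and> deterministic Dl \<and> wf_sdt n Dl \<and> tsize Dl \<le> tsize l"
    using Node.IH(1)[OF _ h(1)] Node.prems(1) by simp
  have R: "0 \<le> wr \<and> deterministic Dr \<and> wf_sdt n Dr \<and> tsize Dr \<le> tsize r"
    using Node.IH(2)[OF _ h(2)] Node.prems(1) by simp
  show ?case using L R h Node.prems(1) by (simp add: add_mono)
next
  case (Stoch p l r)
  from Stoch.prems(2) have "(\<exists>w'. (w',D) \<in> set (derandL l) \<and> w = p*w') \<or> (\<exists>w'. (w',D) \<in> set (derandL r) \<and> w = (1-p)*w')"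
    by auto
  then show ?case
  proof
    assume "\<exists>w'. (w',D) \<in> set (derandL l) \<and> w = p*w'"
    then obtain w' where h: "(w',D) \<in> set (derandL l)" "w = p*w'" by blast
    have "0 \<le> w' \<and> deterministic D \<and> wf_sdt n D \<and> tsize D \<le> tsize l"
      using Stoch.IH(1)[OF _ h(1)] Stoch.prems(1) by simp
    then show ?thesis using h Stoch.prems(1) by simp
  next
    assume "\<exists>w'. (w',D) \<in> set (derandL r) \<and> w = (1-p)*w'"
    then obtain w' where h: "(w',D) \<in> set (derandL r)" "w = (1-p)*w'" by blast
    have "0 \<le> w' \<and> deterministic D \<and> wf_sdt n D \<and> tsize D \<le> tsize r"
      using Stoch.IH(2)[OF _ h(1)] Stoch.prems(1) by simp
    then show ?thesis using h Stoch.prems(1) by simp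
  qed
qed auto

definition upd :: "(nat \<Rightarrow> bool option) \<Rightarrow> nat \<Rightarrow> bool \<Rightarrow> (nat \<Rightarrow> bool option)" where
  "upd k i b = k(i := Some b)"

fun tr :: "(nat \<Rightarrow> bool option) \<Rightarrow> nat \<Rightarrow> sdt \<Rightarrow> sdt" where
  "tr k d (Leaf b) = Leaf b"
| "tr k d (Node i l r) = (case k i of Some b \<Rightarrow> (if b then tr k d r else tr k d l)
     | None \<Rightarrow> (case d of 0 \<Rightarrow> Leaf False
        | Suc d' \<Rightarrow> Node i (tr (upd k i False) d' l) (tr (upd k i True) d' r)))"
| "tr k d (Stoch p l r) = Leaf False"

fun bad :: "(nat \<Rightarrow> bool option) \<Rightarrow> nat \<Rightarrow> sdt \<Rightarrow> bool list \<Rightarrow> bool" where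
  "bad k d (Leaf b) x = False"
| "bad k d (Node i l r) x = (case k i of Some b \<Rightarrow> (if b then bad k d r x else bad k d l x)
     | None \<Rightarrow> (case d of 0 \<Rightarrow> True
        | Suc d' \<Rightarrow> (if x!i then bad (upd k i True) d' r x else bad (upd k i False) d' l x)))"
| "bad k d (Stoch p l r) x = True"


definition cons :: "(nat \<Rightarrow> bool option) \<Rightarrow> bool list \<Rightarrow> bool" where
  "cons k x = (\<forall>i b. k i = Some b \<longrightarrow> x!i = b)"

lemma tr_det: "deterministic (tr k d D)"
  by (induction k d D rule: tr.induct) (auto split: option.splits nat.splits)

lemma tr_wf: "wf_sdt n D \<Longrightarrow> wf_sdt n (tr k d D)"
  by (induction k d D rule: tr.induct) (auto split: option.splits nat.splits)

lemma tr_depth: "depth (tr k d D) \<le> d"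
  by (induction k d D rule: tr.induct) (auto split: option.splits nat.splits)

lemma tr_out: "cons k x \<Longrightarrow> \<not> bad k d D x \<Longrightarrow> out (tr k d D) x = out D x"
  by (induction k d D rule: tr.induct) (auto simp: cons_def upd_def split: option.splits nat.splits if_splits)

lemma cons_upd: "cons (upd k i b) x \<Longrightarrow> x!i = b"
  by (auto simp: cons_def upd_def)

lemma cons_upd_None: "k i = None \<Longrightarrow> cons (upd k i b) x = (x!i = b \<and> cons k x)"
  by (auto simp: cons_def upd_def)

lemma tsize_pos: "tsize D \<ge> 1"
  by (induction D) auto

definition A :: "nat \<Rightarrow> (nat \<Rightarrow> bool option) \<Rightarrow> bool list set" where
  "A n k = {x \<in> cube n. cons k x}"

lemma finite_cube: "finite (cube n)"
proof -
  have "cube n = {xs. set xs \<subseteq> (UNIV::bool set) \<and> length xs = n}" by (auto simp: cube_def)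
  then show ?thesis using finite_lists_length_eq[of "UNIV::bool set" n] by simp
qed

lemma finite_A: "finite (A n k)"
  using finite_cube by (auto simp: A_def)

lemma card_A_split:
  assumes "i < n" "k i = None"
  shows "card (A n (upd k i True)) = card (A n (upd k i False))"
    and "card (A n k) = card (A n (upd k i True)) + card (A n (upd k i False))"
proof -
  let ?f = "\<lambda>x::bool list. x[i := \<not> x!i]"
  have "bij_betw ?f (A n (upd k i False)) (A n (upd k i True))"
  proof (rule bij_betw_byWitness[where f'="?f"])
    show "\<forall>a\<in>A n (upd k i False). ?f (?f a) = a"
    proof
      fix a assume "a \<in> A n (upd k i False)"
      then have "length a = n" by (simp add: A_def cube_def)
      then show "?f (?f a) = a" using assms by simp
    qed
    show "\<forall>a\<in>A n (upd k i True). ?f (?f a) = a"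
    proof
      fix a assume "a \<in> A n (upd k i True)"
      then have "length a = n" by (simp add: A_def cube_def)
      then show "?f (?f a) = a" using assms by simp
    qed
    show "?f ` A n (upd k i False) \<subseteq> A n (upd k i True)"
      using assms by (auto simp: A_def cube_def cons_def upd_def nth_list_update split: if_splits)
    show "?f ` A n (upd k i True) \<subseteq> A n (upd k i False)"
      using assms by (auto simp: A_def cube_def cons_def upd_def nth_list_update split: if_splits)
  qed
  then show "card (A n (upd k i True)) = card (A n (upd k i False))"
    by (simp add: bij_betw_same_card)
  have "A n k = A n (upd k i True) \<union> A n (upd k i False)"
    using assms by (auto simp: A_def cons_upd_None)
  moreover have "A n (upd k i True) \<inter> A n (upd k i False) = {}"
    by (auto simp: A_def dest: cons_upd)
  ultimately show "card (A n k) = card (A n (upd k i True)) + card (A n (upd k i False))"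
    using finite_A by (simp add: card_Un_disjoint)
qed

lemma bad_count:
  "wf_sdt n D \<Longrightarrow> deterministic D \<Longrightarrow>
   real (card {x \<in> A n k. bad k d D x}) \<le> real (card (A n k)) * tsize D / 2^d"
proof (induction k d D rule: tr.induct)
  case (1 k d b)
  then show ?case by simp
next
  case (2 k d i l r)
  show ?case
  proof (cases "k i")
    case (Some b)
    let ?c = "if b then r else l"
    have eq: "{x \<in> A n k. bad k d (Node i l r) x} = {x \<in> A n k. bad k d ?c x}" using Some by auto
    have le: "real (tsize ?c) \<le> real (tsize (Node i l r))" by auto
    have ih: "real (card {x \<in> A n k. bad k d ?c x}) \<le> real (card (A n k)) * tsize ?c / 2^d"
      using "2.IH"(3)[OF Some] "2.IH"(4)[OF Some] "2.prems" by (cases b) auto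
    have "real (card (A n k)) * tsize ?c / 2^d \<le> real (card (A n k)) * tsize (Node i l r) / 2^d"
      using le by (intro divide_right_mono mult_left_mono) auto
    then show ?thesis using eq ih by simp
  next
    case None
    show ?thesis
    proof (cases d)
      case 0
      have "card {x \<in> A n k. bad k d (Node i l r) x} \<le> card (A n k)"
        using finite_A by (intro card_mono) auto
      moreover have "real (card (A n k)) \<le> real (card (A n k)) * tsize (Node i l r)"
        using tsize_pos[of "Node i l r"] by (simp add: mult_le_cancel_left1)
      ultimately show ?thesis using 0 by simp
    next
      case (Suc d')
      let ?kt = "upd k i True" and ?kf = "upd k i False"
      have i: "i < n" using "2.prems" by simp
      have eq: "{x \<in> A n k. bad k d (Node i l r) x} = {x \<in> A n ?kt. bad ?kt d' r x} \<union> {x \<in> A n ?kf. bad ?kf d' l x}"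
        using None Suc by (auto simp: A_def cons_upd_None)
      have dis: "{x \<in> A n ?kt. bad ?kt d' r x} \<inter> {x \<in> A n ?kf. bad ?kf d' l x} = {}"
        by (auto simp: A_def dest: cons_upd)
      have "card {x \<in> A n k. bad k d (Node i l r) x} = card {x \<in> A n ?kt. bad ?kt d' r x} + card {x \<in> A n ?kf. bad ?kf d' l x}"
        unfolding eq using dis finite_A by (intro card_Un_disjoint) auto
      moreover have "real (card {x \<in> A n ?kt. bad ?kt d' r x}) \<le> real (card (A n ?kt)) * tsize r / 2^d'"
        using "2.IH"(2)[OF None Suc] "2.prems" by simp
      moreover have "real (card {x \<in> A n ?kf. bad ?kf d' l x}) \<le> real (card (A n ?kf)) * tsize l / 2^d'"
        using "2.IH"(1)[OF None Suc] "2.prems" by simp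
      moreover have "real (card (A n ?kt)) = real (card (A n k)) / 2" "real (card (A n ?kf)) = real (card (A n k)) / 2"
        using card_A_split[where i=i and n=n and k=k, OF i None] by linarith+
      ultimately have "real (card {x \<in> A n k. bad k d (Node i l r) x}) \<le>
          real (card (A n k)) / 2 * tsize r / 2^d' + real (card (A n k)) / 2 * tsize l / 2^d'"
        by simp
      also have "\<dots> = real (card (A n k)) * tsize (Node i l r) / 2^d"
        using Suc by (simp add: field_simps)
      finally show ?thesis .
    qed
  qed
next
  case (3 k d p l r)
  then show ?case by simp
qed

fun Ek :: "nat set \<Rightarrow> (nat \<Rightarrow> real) \<Rightarrow> nat \<Rightarrow> (nat list \<Rightarrow> real) \<Rightarrow> real" where
  "Ek J w 0 F = F []"
| "Ek J w (Suc k) F = (\<Sum>j\<in>J. w j * Ek J w k (\<lambda>t. F (j # t)))"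

lemma Ek_add: "Ek J w k (\<lambda>t. F t + G t) = Ek J w k F + Ek J w k G"
  by (induction k arbitrary: F G) (auto simp: algebra_simps sum.distrib)

lemma Ek_cmult: "Ek J w k (\<lambda>t. c * F t) = c * Ek J w k F"
proof (induction k arbitrary: F)
  case (Suc k)
  then show ?case by (simp add: sum_distrib_left algebra_simps)
qed simp

lemma Ek_const: "(\<Sum>j\<in>J. w j) = 1 \<Longrightarrow> Ek J w k (\<lambda>t. c) = c"
proof (induction k)
  case (Suc k)
  then show ?case by (simp flip: sum_distrib_right)
qed simp

lemma Ek_sum: "finite X \<Longrightarrow> Ek J w k (\<lambda>t. \<Sum>x\<in>X. F x t) = (\<Sum>x\<in>X. Ek J w k (F x))"
proof (induction X rule: finite_induct)
  case empty
  have "Ek J w k (\<lambda>t. 0 * 0) = 0 * Ek J w k (\<lambda>t. 0)" by (rule Ek_cmult)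
  then show ?case by simp
next
  case (insert x X)
  then show ?case by (simp add: Ek_add)
qed

lemma Ek_mono: "(\<And>j. j \<in> J \<Longrightarrow> 0 \<le> w j) \<Longrightarrow> (\<And>t. F t \<le> G t) \<Longrightarrow> Ek J w k F \<le> Ek J w k G"
proof (induction k arbitrary: F G)
  case (Suc k)
  show ?case unfolding Ek.simps
    by (intro sum_mono mult_left_mono Suc.IH Suc.prems) auto
qed simp

lemma exists_le_avg:
  assumes "finite J" "\<And>j. j \<in> J \<Longrightarrow> 0 \<le> w j" "(\<Sum>j\<in>J. w j) = 1" "(\<Sum>j\<in>J. w j * G j) \<le> (c::real)"
  shows "\<exists>j\<in>J. G j \<le> c"
proof (rule ccontr)
  assume "\<not> ?thesis"
  then have gt: "\<And>j. j \<in> J \<Longrightarrow> G j > c" by force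
  have "(\<Sum>j\<in>J. w j * (G j - c)) = (\<Sum>j\<in>J. w j * G j) - c * (\<Sum>j\<in>J. w j)"
    by (simp add: algebra_simps sum_subtractf sum_distrib_left)
  also have "\<dots> \<le> 0" using assms(3,4) by simp
  finally have le0: "(\<Sum>j\<in>J. w j * (G j - c)) \<le> 0" .
  have nn: "\<And>j. j \<in> J \<Longrightarrow> 0 \<le> w j * (G j - c)" using assms(2) gt by (simp add: less_imp_le)
  have "(\<Sum>j\<in>J. w j * (G j - c)) = 0" using le0 nn by (meson antisym sum_nonneg)
  then have "\<forall>j\<in>J. w j * (G j - c) = 0" using nn assms(1) by (simp add: sum_nonneg_eq_0_iff)
  then have "\<forall>j\<in>J. w j = 0" using gt by auto
  then show False using assms(3) by simp
qed

lemma Ek_exists: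
  assumes "finite J" "\<And>j. j \<in> J \<Longrightarrow> 0 \<le> w j" "(\<Sum>j\<in>J. w j) = 1"
  shows "Ek J w k F \<le> c \<Longrightarrow> \<exists>t. length t = k \<and> set t \<subseteq> J \<and> F t \<le> c"
proof (induction k arbitrary: F)
  case 0
  then show ?case by simp
next
  case (Suc k)
  have "(\<Sum>j\<in>J. w j * Ek J w k (\<lambda>t. F (j#t))) \<le> c" using Suc.prems by simp
  then obtain j where j: "j \<in> J" "Ek J w k (\<lambda>t. F (j # t)) \<le> c"
    using exists_le_avg[where J=J and w=w and G="\<lambda>j. Ek J w k (\<lambda>t. F (j # t))" and c=c] assms by blast
  then obtain t where "length t = k" "set t \<subseteq> J" "F (j # t) \<le> c" using Suc.IH by blast
  then show ?case using j by (intro exI[of _ "j # t"]) auto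
qed

lemma Ek_var:
  assumes "\<And>j. j \<in> J \<Longrightarrow> 0 \<le> w j" "(\<Sum>j\<in>J. w j) = 1"
    and "(\<Sum>j\<in>J. w j * a j) = 0" "\<And>j. j \<in> J \<Longrightarrow> \<bar>a j\<bar> \<le> 1"
  shows "Ek J w k (\<lambda>t. (\<Sum>j\<leftarrow>t. a j)^2) \<le> real k"
proof (induction k)
  case 0
  then show ?case by simp
next
  case (Suc k)
  let ?S = "\<lambda>t. (\<Sum>j\<leftarrow>t. a j)"
  have step: "Ek J w k (\<lambda>t. (?S (j # t))^2) = (a j)^2 + 2 * a j * Ek J w k ?S + Ek J w k (\<lambda>t. (?S t)^2)" for j
  proof -
    have "Ek J w k (\<lambda>t. (?S (j # t))^2) = Ek J w k (\<lambda>t. (a j)^2 + ((2 * a j) * ?S t + (?S t)^2))"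
      by (simp add: power2_eq_square algebra_simps)
    also have "\<dots> = (a j)^2 + 2 * a j * Ek J w k ?S + Ek J w k (\<lambda>t. (?S t)^2)"
      by (simp add: Ek_add Ek_cmult Ek_const assms(2))
    finally show ?thesis .
  qed
  have "Ek J w (Suc k) (\<lambda>t. (?S t)^2) = (\<Sum>j\<in>J. w j * ((a j)^2 + 2 * a j * Ek J w k ?S + Ek J w k (\<lambda>t. (?S t)^2)))"
    by (simp only: Ek.simps step)
  also have "\<dots> = (\<Sum>j\<in>J. w j * (a j)^2) + 2 * Ek J w k ?S * (\<Sum>j\<in>J. w j * a j) + Ek J w k (\<lambda>t. (?S t)^2) * (\<Sum>j\<in>J. w j)"
    by (simp add: algebra_simps sum.distrib sum_distrib_left sum_distrib_right)
  also have "\<dots> = (\<Sum>j\<in>J. w j * (a j)^2) + Ek J w k (\<lambda>t. (?S t)^2)"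
    using assms(2,3) by simp
  also have "(\<Sum>j\<in>J. w j * (a j)^2) \<le> (\<Sum>j\<in>J. w j)"
  proof (intro sum_mono)
    fix j assume "j \<in> J"
    then have "\<bar>a j\<bar> \<le> 1" using assms(4) by simp
    then have "\<bar>a j\<bar>^2 \<le> 1" by (intro power_le_one) auto
    then have "(a j)^2 \<le> 1" by simp
    then show "w j * (a j)^2 \<le> w j" using assms(1) \<open>j \<in> J\<close> by (simp add: mult_left_le)
  qed
  finally show ?case using Suc assms(2) by simp
qed

fun graft :: "sdt \<Rightarrow> (bool \<Rightarrow> sdt) \<Rightarrow> sdt" where
  "graft (Leaf b) f = f b"
| "graft (Node i l r) f = Node i (graft l f) (graft r f)"
| "graft (Stoch p l r) f = Stoch p (graft l f) (graft r f)"

lemma graft_det: "deterministic D \<Longrightarrow> (\<And>b. deterministic (f b)) \<Longrightarrow> deterministic (graft D f)"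
  by (induction D) auto

lemma graft_wf: "wf_sdt n D \<Longrightarrow> (\<And>b. wf_sdt n (f b)) \<Longrightarrow> wf_sdt n (graft D f)"
  by (induction D) auto

lemma graft_depth: "(\<And>b. depth (f b) \<le> m) \<Longrightarrow> depth (graft D f) \<le> depth D + m"
  by (induction D) auto

lemma graft_out: "deterministic D \<Longrightarrow> out (graft D f) x = out (f (out D x)) x"
  by (induction D) auto

fun maj :: "sdt list \<Rightarrow> nat \<Rightarrow> nat \<Rightarrow> sdt" where
  "maj [] K c = Leaf (K \<le> 2 * c)"
| "maj (D # Ds) K c = graft D (\<lambda>b. maj Ds K (if b then Suc c else c))"

lemma maj_det: "(\<forall>D\<in>set Ds. deterministic D) \<Longrightarrow> deterministic (maj Ds K c)"
  by (induction Ds arbitrary: c) (auto intro: graft_det)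

lemma maj_wf: "(\<forall>D\<in>set Ds. wf_sdt n D) \<Longrightarrow> wf_sdt n (maj Ds K c)"
  by (induction Ds arbitrary: c) (auto intro: graft_wf)

lemma maj_depth: "(\<forall>D\<in>set Ds. depth D \<le> d) \<Longrightarrow> depth (maj Ds K c) \<le> length Ds * d"
proof (induction Ds arbitrary: c)
  case (Cons D Ds)
  have "depth (maj (D # Ds) K c) \<le> depth D + length Ds * d"
    using Cons by (simp add: graft_depth)
  then show ?case using Cons.prems by simp
qed simp

lemma maj_out: "(\<forall>D\<in>set Ds. deterministic D) \<Longrightarrow>
  out (maj Ds K c) x = (K \<le> 2 * (c + length (filter (\<lambda>D. out D x) Ds)))"
  by (induction Ds arbitrary: c) (auto simp: graft_out)

lemma sum_bool_UNIV: "(\<Sum>b\<in>(UNIV::bool set). f b) = f True + f False"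
  by (simp add: UNIV_bool add.commute)

lemma pmf_False: "pmf M False = 1 - pmf M True"
proof -
  have "(\<Sum>b\<in>(UNIV::bool set). pmf M b) = 1" by (rule sum_pmf_eq_1) auto
  then show ?thesis by (simp add: sum_bool_UNIV)
qed

lemma cube_ne: "cube n \<noteq> {}"
  by (auto simp: cube_def intro: exI[of _ "replicate n False"])

definition err :: "real \<Rightarrow> bool \<Rightarrow> real" where
  "err m b = (if b then 1 - m else m)"

lemma opt_sum: "opt n T = (\<Sum>x\<in>cube n. err (mu T x) (round (mu T x))) / card (cube n)"
proof -
  have "measure_pmf.prob (run T x) {y. y \<noteq> b} = err (mu T x) b" for x b
  proof -
    have "{y. y \<noteq> b} = {\<not> b}" by auto
    then show ?thesis by (cases b) (auto simp: measure_pmf_single mu_pmf err_def pmf_False)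
  qed
  then show ?thesis unfolding opt_def unif_def
    by (simp add: integral_pmf_of_set[OF cube_ne finite_cube])
qed

lemma pmf_pair_map: "pmf (map_pmf (\<lambda>y. (c, y)) R) (a, b) = (if c = a then pmf R b else 0)"
proof (cases "c = a")
  case True
  have "inj (\<lambda>y. (c, y))" by (auto intro: injI)
  then show ?thesis using True pmf_map_inj'[of "\<lambda>y. (c, y)" R b] by simp
next
  case False
  then show ?thesis by (auto intro!: pmf_map_outside)
qed

lemma disagree_sum:
  assumes "deterministic M"
  shows "disagree n M T = (\<Sum>x\<in>cube n. err (mu T x) (out M x)) / card (cube n)"
proof -
  let ?P = "joint n T \<bind> (\<lambda>(x, y). run M x \<bind> (\<lambda>y'. return_pmf (y', y)))"
  have P: "?P = unif n \<bind> (\<lambda>x. map_pmf (\<lambda>y. (out M x, y)) (run T x))"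
    unfolding joint_def using assms
    by (simp add: bind_assoc_pmf bind_return_pmf run_det map_pmf_def)
  have S: "{(y', y). y' \<noteq> y} = {(True, False), (False, True)}" by auto
  have "disagree n M T = pmf ?P (True, False) + pmf ?P (False, True)"
    unfolding disagree_def S by (simp add: measure_measure_pmf_finite)
  also have "\<dots> = (\<Sum>x\<in>cube n. pmf (map_pmf (\<lambda>y. (out M x, y)) (run T x)) (True, False)
      + pmf (map_pmf (\<lambda>y. (out M x, y)) (run T x)) (False, True)) / card (cube n)"
    unfolding P pmf_bind unif_def integral_pmf_of_set[OF cube_ne finite_cube]
    by (simp add: sum.distrib add_divide_distrib)
  also have "\<dots> = (\<Sum>x\<in>cube n. err (mu T x) (out M x)) / card (cube n)"
    by (intro arg_cong[where f="\<lambda>s. s / _"] sum.cong refl)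
       (auto simp: pmf_pair_map err_def mu_pmf pmf_False)
  finally show ?thesis .
qed

lemma ind_01: "0 \<le> ind b" "ind b \<le> 1"
  by (auto simp: ind_def)

lemma ln2_ge: "ln (2::real) \<ge> 1/2"
proof -
  have "ln (1/2::real) \<le> 1/2 - 1" by (rule ln_le_minus_one) simp
  moreover have "ln (1/2::real) = - ln 2" by (simp add: ln_div)
  ultimately show ?thesis by simp
qed

lemma sum_list_nth_map: "(\<Sum>p\<leftarrow>L. f p) = (\<Sum>j\<in>{..<length L}. f (L!j))"
  using sum_list_sum_nth[of "map f L"] by (simp add: atLeast0LessThan)

lemma len_filter_ind: "real (length (filter (\<lambda>D. out D x) (map E t))) = (\<Sum>j\<leftarrow>t. ind (out (E j) x))"
  by (induction t) (auto simp: ind_def)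

lemma sum_list_minus_const: "(\<Sum>j\<leftarrow>t. (f j - (c::real))) = (\<Sum>j\<leftarrow>t. f j) - real (length t) * c"
  by (induction t) (auto simp: algebra_simps)

lemma loss_bound:
  fixes mu m1 e eps avg :: real
  assumes "0 \<le> mu" "mu \<le> 1" "\<bar>mu - m1\<bar> \<le> e" "eps > 0"
  shows "err mu (1/2 \<le> avg) - err mu (round mu) \<le> 2*e + eps + 4*(avg - m1)^2/eps"
proof -
  have e0: "0 \<le> e" using assms(3) by linarith
  have q: "2 * \<bar>avg - m1\<bar> \<le> eps + 4*(avg - m1)^2/eps"
  proof -
    have "0 \<le> (2 * \<bar>avg - m1\<bar> - eps)^2" by simp
    then have "4 * \<bar>avg - m1\<bar> * eps \<le> 4*(avg - m1)^2 + eps^2"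
      by (simp add: power2_eq_square algebra_simps)
    then have "2 * \<bar>avg - m1\<bar> * eps \<le> 4*(avg - m1)^2 + eps^2"
      using mult_nonneg_nonneg[OF abs_ge_zero[of "avg - m1"] less_imp_le[OF assms(4)]] by linarith
    then have "2 * \<bar>avg - m1\<bar> \<le> (4*(avg - m1)^2 + eps^2) / eps"
      using assms(4) by (simp add: pos_le_divide_eq)
    also have "\<dots> = eps + 4*(avg - m1)^2/eps"
      using assms(4) by (simp add: field_simps power2_eq_square)
    finally show ?thesis .
  qed
  have nn: "0 \<le> 4*(avg - m1)^2/eps" using assms(4) by simp
  show ?thesis
  proof (cases "(1/2 \<le> avg) = round mu")
    case True
    then show ?thesis using e0 nn assms(4) by simp
  next
    case False
    have "err mu (1/2 \<le> avg) - err mu (round mu) \<le> 2 * \<bar>avg - mu\<bar>"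
    proof (cases "1/2 \<le> avg")
      case True
      then have "\<not> round mu" using False by simp
      then have "mu < 1/2" by (simp add: round_def)
      then show ?thesis using True by (simp add: err_def)
    next
      case F: False
      then have "round mu" using False by simp
      then have "mu \<ge> 1/2" by (simp add: round_def)
      then show ?thesis using F by (simp add: err_def)
    qed
    also have "\<dots> \<le> 2 * \<bar>avg - m1\<bar> + 2 * e"
    proof -
      have "avg - mu = (avg - m1) + (m1 - mu)" by simp
      then have "\<bar>avg - mu\<bar> \<le> \<bar>avg - m1\<bar> + \<bar>m1 - mu\<bar>" by (metis abs_triangle_ineq)
      moreover have "\<bar>m1 - mu\<bar> = \<bar>mu - m1\<bar>" by (rule abs_minus_commute)
      ultimately show ?thesis using assms(3) by (smt (verit))
    qed
    finally show ?thesis using q by linarith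
  qed
qed

lemma nat_ceil_le: "0 \<le> z \<Longrightarrow> real (nat \<lceil>z\<rceil>) \<le> z + 1"
proof -
  assume z: "0 \<le> z"
  then have "0 \<le> \<lceil>z\<rceil>" by simp
  then have "real (nat \<lceil>z\<rceil>) = of_int \<lceil>z\<rceil>" by simp
  then show ?thesis using of_int_ceiling_le_add_one[of z] by simp
qed

lemma pow2_ge: "0 < (y::real) \<Longrightarrow> y \<le> 2 ^ nat \<lceil>log 2 y\<rceil>"
proof -
  assume y: "0 < y"
  have "y = 2 powr (log 2 y)" using y by simp
  also have "\<dots> \<le> 2 powr real (nat \<lceil>log 2 y\<rceil>)"
    by (intro powr_mono real_nat_ceiling_ge) simp
  also have "\<dots> = 2 ^ nat \<lceil>log 2 y\<rceil>" by (simp add: powr_realpow)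
  finally show ?thesis .
qed

lemma depth_arith:
  fixes eps sz :: real
  assumes "0 < eps" "eps < 1/2" "1 \<le> sz"
  shows "real (nat \<lceil>4/eps^2\<rceil>) * real (nat \<lceil>log 2 (2 * sz/eps)\<rceil>) \<le> 30 * ln (sz/eps) / eps^2"
proof -
  define y where "y = sz/eps"
  have y2: "y > 2" using assms by (simp add: y_def field_simps)
  have "ln 2 < ln y" using y2 by simp
  then have lny: "ln y \<ge> 1/2" using ln2_ge by linarith
  have e2: "eps^2 < 1" using assms by (simp add: power_less_one_iff)
  have e2p: "eps^2 > 0" using assms by simp
  have k: "real (nat \<lceil>4/eps^2\<rceil>) \<le> 5/eps^2"
  proof -
    have "real (nat \<lceil>4/eps^2\<rceil>) \<le> 4/eps^2 + 1" by (rule nat_ceil_le) simp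
    also have "1 \<le> 1/eps^2" using e2 e2p by simp
    then have "4/eps^2 + 1 \<le> 5/eps^2" by simp
    finally show ?thesis by simp
  qed
  have "2 * sz/eps = 2 * y" by (simp add: y_def)
  moreover have "log 2 (2 * y) = log 2 2 + log 2 y"
    using y2 by (simp only: log_mult) simp
  ultimately have "log 2 (2 * sz/eps) = log 2 2 + log 2 y" by simp
  then have "log 2 (2 * sz/eps) = 1 + log 2 y" by simp
  also have "log 2 y = ln y / ln 2" by (simp add: log_def)
  also have "\<dots> \<le> 2 * ln y"
    using ln2_ge lny by (simp add: divide_le_eq)
  finally have lg: "log 2 (2 * sz/eps) \<le> 1 + 2 * ln y" by simp
  have lgp: "0 \<le> log 2 (2 * sz/eps)" using assms by simp
  have d: "real (nat \<lceil>log 2 (2 * sz/eps)\<rceil>) \<le> 6 * ln y"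
    using nat_ceil_le[OF lgp] lg lny by linarith
  have "real (nat \<lceil>4/eps^2\<rceil>) * real (nat \<lceil>log 2 (2 * sz/eps)\<rceil>) \<le> 5/eps^2 * (6 * ln y)"
    by (intro mult_mono k d) simp_all
  also have "\<dots> = 30 * ln (sz/eps) / eps^2" by (simp add: y_def)
  finally show ?thesis .
qed

lemma main_bound:
  assumes wf: "wf_sdt n T" and eps: "0 < eps" "eps < 1/2"
  shows "\<exists>T'. deterministic T' \<and> wf_sdt n T' \<and>
         real (depth T') \<le> 30 * ln (real (tsize T) / eps) / eps\<^sup>2 \<and>
         disagree n T' T \<le> opt n T + 3 * eps"
proof -
  define s where "s = tsize T"
  define L where "L = derandL T"
  define J where "J = {..<length L}"
  define w where "w = (\<lambda>j. fst (L!j))"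
  define Dj where "Dj = (\<lambda>j. snd (L!j))"
  define d where "d = nat \<lceil>log 2 (2 * s/eps)\<rceil>"
  define k where "k = nat \<lceil>4/eps^2\<rceil>"
  define E where "E = (\<lambda>j. tr (\<lambda>_. None) d (Dj j))"
  define X where "X = cube n"
  define N where "N = real (card X)"
  have finJ: "finite J" by (simp add: J_def)
  have finX: "finite X" by (simp add: X_def finite_cube)
  have Npos: "N > 0" using finX cube_ne[of n] by (simp add: N_def X_def card_gt_0_iff)
  have s1: "real s \<ge> 1" using tsize_pos[of T] by (simp add: s_def)
  have props: "0 \<le> w j \<and> deterministic (Dj j) \<and> wf_sdt n (Dj j) \<and> tsize (Dj j) \<le> s" if "j \<in> J" for j
  proof -
    have "(w j, Dj j) \<in> set L" using that by (simp add: w_def Dj_def J_def)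
    then show ?thesis using derandL_props[OF wf] by (simp add: L_def s_def)
  qed
  have w0: "\<And>j. j \<in> J \<Longrightarrow> 0 \<le> w j" using props by blast
  have wsum: "(\<Sum>j\<in>J. w j) = 1"
    using derandL_wsum[of T] sum_list_nth_map[of "\<lambda>p. fst p" L]
    by (simp add: L_def J_def w_def case_prod_unfold)
  have mu_eq: "mu T x = (\<Sum>j\<in>J. w j * ind (out (Dj j) x))" for x
    using derandL_mu[OF wf, of x] sum_list_nth_map[of "\<lambda>p. fst p * ind (out (snd p) x)" L]
    by (simp add: L_def J_def w_def Dj_def case_prod_unfold)
  define mu1 where "mu1 = (\<lambda>x. \<Sum>j\<in>J. w j * ind (out (E j) x))"
  define e where "e = (\<lambda>x. \<Sum>j\<in>J. w j * ind (bad (\<lambda>_. None) d (Dj j) x))"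
  have cons0: "cons (\<lambda>_. None) x" for x by (simp add: cons_def)
  have mu_close: "\<bar>mu T x - mu1 x\<bar> \<le> e x" for x
  proof -
    have "mu T x - mu1 x = (\<Sum>j\<in>J. w j * (ind (out (Dj j) x) - ind (out (E j) x)))"
      by (simp add: mu_eq mu1_def algebra_simps sum_subtractf)
    also have "\<bar>\<dots>\<bar> \<le> (\<Sum>j\<in>J. \<bar>w j * (ind (out (Dj j) x) - ind (out (E j) x))\<bar>)"
      by (rule sum_abs)
    also have "\<dots> \<le> e x" unfolding e_def
    proof (intro sum_mono)
      fix j assume j: "j \<in> J"
      have "\<bar>ind (out (Dj j) x) - ind (out (E j) x)\<bar> \<le> ind (bad (\<lambda>_. None) d (Dj j) x)"
        using tr_out[OF cons0, of d "Dj j"] by (cases "bad (\<lambda>_. None) d (Dj j) x") (auto simp: E_def ind_def)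
      then show "\<bar>w j * (ind (out (Dj j) x) - ind (out (E j) x))\<bar> \<le> w j * ind (bad (\<lambda>_. None) d (Dj j) x)"
        using w0[OF j] by (simp add: abs_mult mult_left_mono)
    qed
    finally show ?thesis .
  qed
  have A0: "A n (\<lambda>_. None) = X" by (simp add: A_def X_def cons0)
  have esum: "(\<Sum>x\<in>X. e x) \<le> N * s / 2^d"
  proof -
    have "(\<Sum>x\<in>X. e x) = (\<Sum>x\<in>X. \<Sum>j\<in>J. w j * ind (bad (\<lambda>_. None) d (Dj j) x))"
      by (simp add: e_def)
    also have "\<dots> = (\<Sum>j\<in>J. \<Sum>x\<in>X. w j * ind (bad (\<lambda>_. None) d (Dj j) x))"
      by (rule sum.swap)
    also have "\<dots> = (\<Sum>j\<in>J. w j * (\<Sum>x\<in>X. ind (bad (\<lambda>_. None) d (Dj j) x)))"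
      by (simp add: sum_distrib_left)
    also have "\<dots> = (\<Sum>j\<in>J. w j * real (card {x\<in>X. bad (\<lambda>_. None) d (Dj j) x}))"
      using finX by (simp add: ind_def sum.If_cases Int_def)
    also have "\<dots> \<le> (\<Sum>j\<in>J. w j * (N * s / 2^d))"
    proof (intro sum_mono mult_left_mono)
      fix j assume j: "j \<in> J"
      have "real (card {x\<in>X. bad (\<lambda>_. None) d (Dj j) x}) \<le> N * tsize (Dj j) / 2^d"
        using bad_count[where n=n and D="Dj j" and k="\<lambda>_. None" and d=d] props[OF j] by (simp add: A0 N_def)
      also have "\<dots> \<le> N * s / 2^d"
        using props[OF j] Npos by (simp add: divide_right_mono)
      finally show "real (card {x\<in>X. bad (\<lambda>_. None) d (Dj j) x}) \<le> N * s / 2^d" .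
      show "0 \<le> w j" using w0 j by simp
    qed
    also have "\<dots> = N * s / 2^d" by (simp only: sum_distrib_right[symmetric] wsum mult_1)
    finally show ?thesis .
  qed
  define a where "a = (\<lambda>x j. ind (out (E j) x) - mu1 x)"
  have mu1_01: "0 \<le> mu1 x \<and> mu1 x \<le> 1" for x
  proof -
    have "0 \<le> mu1 x" unfolding mu1_def using w0 ind_01 by (intro sum_nonneg) auto
    moreover have "mu1 x \<le> (\<Sum>j\<in>J. w j)" unfolding mu1_def
      using w0 ind_01 by (intro sum_mono) (auto simp: mult_left_le)
    ultimately show ?thesis using wsum by simp
  qed
  have a_sum: "(\<Sum>j\<in>J. w j * a x j) = 0" for x
    using wsum by (simp add: a_def right_diff_distrib sum_subtractf mu1_def flip: sum_distrib_right)
  have a_abs: "\<bar>a x j\<bar> \<le> 1" for x j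
    using mu1_01[of x] ind_01[of "out (E j) x"] by (simp add: a_def abs_le_iff)
  have "Ek J w k (\<lambda>t. \<Sum>x\<in>X. (\<Sum>j\<leftarrow>t. a x j)^2) = (\<Sum>x\<in>X. Ek J w k (\<lambda>t. (\<Sum>j\<leftarrow>t. a x j)^2))"
    by (rule Ek_sum[OF finX])
  also have "\<dots> \<le> (\<Sum>x\<in>X. real k)"
    by (intro sum_mono Ek_var[OF w0 wsum a_sum a_abs])
  also have "\<dots> = N * k" by (simp add: N_def)
  finally obtain t where t: "length t = k" "set t \<subseteq> J" "(\<Sum>x\<in>X. (\<Sum>j\<leftarrow>t. a x j)^2) \<le> N * k"
    using Ek_exists[OF finJ w0 wsum] by blast
  define M where "M = maj (map E t) k 0"
  have Edet: "\<forall>D\<in>set (map E t). deterministic D" by (auto simp: E_def tr_det)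
  have Mdet: "deterministic M" unfolding M_def using Edet by (rule maj_det)
  have Mwf: "wf_sdt n M" unfolding M_def
    using t(2) props by (intro maj_wf) (auto simp: E_def intro!: tr_wf)
  have Mdepth: "depth M \<le> k * d" unfolding M_def
    using maj_depth[of "map E t" d k 0] t(1) by (simp add: E_def tr_depth)
  have kpos: "real k \<ge> 4/eps^2" unfolding k_def by (rule real_nat_ceiling_ge)
  have kp: "real k > 0" using kpos eps by (smt (verit) divide_pos_pos zero_less_power)
  define cnt where "cnt = (\<lambda>x. \<Sum>j\<leftarrow>t. ind (out (E j) x))"
  have outM: "out M x = (1/2 \<le> cnt x / k)" for x
  proof -
    have "out M x = (k \<le> 2 * length (filter (\<lambda>D. out D x) (map E t)))"
      unfolding M_def using maj_out[OF Edet, of k 0 x] by simp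
    also have "\<dots> = (real k \<le> 2 * cnt x)"
      using len_filter_ind[of x E t] unfolding cnt_def
      by (metis (mono_tags, lifting) of_nat_le_iff of_nat_mult of_nat_numeral)
    also have "\<dots> = (1/2 \<le> cnt x / k)" using kp by (simp add: field_simps)
    finally show ?thesis .
  qed
  have Sx: "(\<Sum>j\<leftarrow>t. a x j) = cnt x - real k * mu1 x" for x
    unfolding a_def cnt_def using sum_list_minus_const[of "\<lambda>j. ind (out (E j) x)" "mu1 x" t] t(1) by simp
  have delta: "cnt x / k - mu1 x = (\<Sum>j\<leftarrow>t. a x j) / k" for x
    using kp by (simp add: Sx field_simps)
  have loss: "err (mu T x) (out M x) - err (mu T x) (round (mu T x))
      \<le> 2 * e x + eps + 4 / eps * ((\<Sum>j\<leftarrow>t. a x j)^2 / (real k)^2)" for x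
  proof -
    have "err (mu T x) (out M x) - err (mu T x) (round (mu T x)) \<le> 2 * e x + eps + 4 * (cnt x / k - mu1 x)^2/eps"
      unfolding outM by (rule loss_bound[OF mu_bounds mu_close eps(1)])
    also have "4 * (cnt x / k - mu1 x)^2/eps = 4 / eps * ((\<Sum>j\<leftarrow>t. a x j)^2 / (real k)^2)"
      by (simp add: delta power_divide)
    finally show ?thesis .
  qed
  have "disagree n M T - opt n T = (\<Sum>x\<in>X. err (mu T x) (out M x) - err (mu T x) (round (mu T x))) / N"
    by (simp add: disagree_sum[OF Mdet] opt_sum X_def N_def diff_divide_distrib sum_subtractf)
  also have "\<dots> \<le> (\<Sum>x\<in>X. 2 * e x + eps + 4 / eps * ((\<Sum>j\<leftarrow>t. a x j)^2 / (real k)^2)) / N"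
    using Npos by (intro divide_right_mono sum_mono loss) simp_all
  also have "(\<Sum>x\<in>X. 2 * e x + eps + 4 / eps * ((\<Sum>j\<leftarrow>t. a x j)^2 / (real k)^2))
      = 2 * (\<Sum>x\<in>X. e x) + N * eps + 4 / eps / (real k)^2 * (\<Sum>x\<in>X. (\<Sum>j\<leftarrow>t. a x j)^2)"
    by (simp add: sum.distrib sum_distrib_left N_def)
  also have "\<dots> \<le> 2 * (N * s / 2^d) + N * eps + 4 / eps / (real k)^2 * (N * k)"
    using esum t(3) eps kp Npos by (intro add_mono mult_left_mono) simp_all
  finally have dis: "disagree n M T - opt n T \<le> (2 * (N * s / 2^d) + N * eps + 4 / eps / (real k)^2 * (N * k)) / N"
    using Npos by (simp add: divide_right_mono)
  also have "\<dots> = 2 * s / 2^d + eps + 4 / (eps * k)"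
    using Npos kp by (simp add: field_simps power2_eq_square)
  also have "2 * s / 2^d \<le> eps"
  proof -
    have "2 * s / eps \<le> 2 ^ d" unfolding d_def using s1 eps by (intro pow2_ge) simp
    then show ?thesis using eps by (simp add: field_simps)
  qed
  also have "4 / (eps * k) \<le> eps"
  proof -
    have "4 / eps^2 * eps \<le> real k * eps" using kpos eps by (intro mult_right_mono) simp_all
    then have "4 / eps \<le> real k * eps" using eps by (simp add: power2_eq_square)
    then show ?thesis using eps kp by (simp add: field_simps power2_eq_square)
  qed
  finally have errb: "disagree n M T \<le> opt n T + 3 * eps" by simp
  have "real (depth M) \<le> real k * real d" using Mdepth by (metis of_nat_le_iff of_nat_mult)
  also have "\<dots> \<le> 30 * ln (real (tsize T) / eps) / eps\<^sup>2"
    unfolding k_def d_def s_def using depth_arith[OF eps s1[unfolded s_def]] by simp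
  finally show ?thesis using Mdet Mwf errb by blast
qed

theorem corollary7:
  shows "\<exists>C::real. C > 0 \<and>
    (\<forall>n T \<epsilon>. wf_sdt n T \<longrightarrow> 0 < \<epsilon> \<longrightarrow> \<epsilon> < 1/2 \<longrightarrow>
      (\<exists>T'. deterministic T' \<and> wf_sdt n T' \<and>
         real (depth T') \<le> C * ln (real (tsize T) / \<epsilon>) / \<epsilon>\<^sup>2 \<and>
         disagree n T' T \<le> opt n T + 3 * \<epsilon>))"
  proof -
  have "\<forall>n T \<epsilon>. wf_sdt n T \<longrightarrow> 0 < \<epsilon> \<longrightarrow> \<epsilon> < 1/2 \<longrightarrow>
      (\<exists>T'. deterministic T' \<and> wf_sdt n T' \<and>
         real (depth T') \<le> 30 * ln (real (tsize T) / \<epsilon>) / \<epsilon>\<^sup>2 \<and>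
         disagree n T' T \<le> opt n T + 3 * \<epsilon>)"
    using main_bound by blast
  then show ?thesis by (intro exI[of _ 30]) simp
qed

end
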